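(* Let $(u,K)$ be a Griffith almost-minimizer in $\Omega$ with gauge $h$, and let $x_0\in K$, $r_0>0$ with $B(x_0,r_0)\subset\Omega$. Suppose that $\beta_K(x_0,r_0)\le\tau/10$ and that $E$ is a minimal separating extension of $K$ in $B(x_0,r_0)$, and let $\sigma$ be the stopping time function defined with respect to $E$. Then for each $x\in K\cap B(x_0,9r_0/10)$ and $t\in(\sigma(x),r_0/10]$ we have $$\beta_K(x,t)\le\tau\quad\text{and}\quad\beta_E(x,t)\le4\tau.$$
   Context: Let $\Omega\subset\mathbb{R}^2$ be open and fix a linear map $\mathbb{C}:\mathbb{R}^{2\times2}\to\mathbb{R}^{2\times2}_{\rm sym}$ with $\mathbb{C}(\xi-\xi^T)=0$ and $\mathbb{C}\xi:\xi\ge c_0|\xi+\xi^T|^2$ for all $\xi$, some $c_0>0$. $e(u)=(\nabla u+\nabla u^T)/2$; $B(x,r)$ open ball. Admissible pair: $K\subset\Omega$ relatively closed, $u\in W^{1,2}_{\rm loc}(\Omega\setminus K;\mathbb{R}^2)$. For $\overline{B(x,r)}\subset\Omega$, a competitor in $B(x,r)$ is an admissible $(v,L)$ with $L\setminus B(x,r)=K\setminus B(x,r)$, $v=u$ a.e. in $\Omega\setminus(K\cup B(x,r))$. Gauge: non-decreasing $h:(0,\infty)\to[0,\infty]$, $h(0^+)=0$. Coral: $\mathcal{H}^1(K\cap B(x,r))>0$ for $x\in K$, $r>0$. A Griffith almost-minimizer with gauge $h$ is an admissible coral pair of locally finite energy with $\int_{B(x,r)\setminus K}\mathbb{C}e(u):e(u)+\mathcal{H}^1(K\cap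 B(x,r))\le\int_{B(x,r)\setminus L}\mathbb{C}e(v):e(v)+\mathcal{H}^1(L\cap B(x,r))+h(r)r$ for all $\overline{B(x,r)}\subset\Omega$ and competitors $(v,L)$. Flatness: for $F\ni x$, $\beta_F(x,r)=r^{-1}\inf_\ell\sup_{y\in F\cap B(x,r)}\mathrm{dist}(y,\ell)$ over lines through $x$; $\nu$ unit normal of a minimizing line, $D^\pm_t(x,r)=\{z\in B(x,r):\pm(z-x)\cdot\nu>t\}$. $F$ separates $B(x,r)$ if $\beta:=\beta_F(x,r)\le1/2$ and $D^\pm_{\beta r}(x,r)$ lie in distinct connected components of $B(x,r)\setminus F$. A separating extension of $K$ in $B(x_0,r_0)$ is a relatively closed coral $E\subset B(x_0,r_0)$ with $K\cap B(x_0,r_0)\subset E$, $\beta_E(x_0,r_0)=\beta_K(x_0,r_0)$, $E$ separating $B(x_0,r_0)$; a minimal separating extension minimizes $\mathcal{H}^1(E\setminus K)$ among them. Stopping time: $\tau=10^{-10}$. For $x\in K\cap B(x_0,9r_0/10)$ and $t\in(0,r_0/10)$, $B(x,t)$ is a good ball if $\beta_K(x,t)\le\tau$ and $t^{-1}\mathcal{H}^1((E\cap B(x,t))\setminus K)\le\tau$; $\sigma(x)=\inf\{r>0: B(x,t)\text{ is good for all }t\in[r,r_0/10]\}$. *)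

theory Defs
  imports "HOL-Analysis.Analysis"
begin

type_synonym pt = "real^2"
type_synonym mat2 = "real^2^2"

definition H1_delta :: "real \<Rightarrow> pt set \<Rightarrow> ennreal" where
  "H1_delta \<delta> A = (INF C \<in> {C :: nat \<Rightarrow> pt set. A \<subseteq> (\<Union>i. C i) \<and>
       (\<forall>i. bounded (C i) \<and> diameter (C i) \<le> \<delta>)}. (\<Sum>i. ennreal (diameter (C i))))"

definition H1 :: "pt set \<Rightarrow> ennreal" where
  "H1 A = (SUP \<delta> \<in> {0<..}. H1_delta \<delta> A)"

definition loc_L2 :: "pt set \<Rightarrow> (pt \<Rightarrow> 'b::euclidean_space) \<Rightarrow> bool" where
  "loc_L2 U f \<longleftrightarrow> set_borel_measurable lebesgue U f \<and>
     (\<forall>S. compact S \<and> S \<subseteq> U \<longrightarrow> set_integrable lebesgue S (\<lambda>z. (norm (f z))\<^sup>2))"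

definition pderiv_j :: "(pt \<Rightarrow> real) \<Rightarrow> 2 \<Rightarrow> pt \<Rightarrow> real" where
  "pderiv_j \<phi> j z = frechet_derivative \<phi> (at z) (axis j 1)"

definition test_fun :: "pt set \<Rightarrow> (pt \<Rightarrow> real) \<Rightarrow> bool" where
  "test_fun U \<phi> \<longleftrightarrow> (\<forall>z. \<phi> differentiable (at z)) \<and>
     (\<forall>j. continuous_on UNIV (pderiv_j \<phi> j)) \<and>
     compact (closure {z. \<phi> z \<noteq> 0}) \<and> closure {z. \<phi> z \<noteq> 0} \<subseteq> U"

text \<open>G z $ i $ j is the weak partial derivative of the i-th component w.r.t. x_j.\<close>
definition is_weak_grad :: "pt set \<Rightarrow> (pt \<Rightarrow> pt) \<Rightarrow> (pt \<Rightarrow> mat2) \<Rightarrow> bool" where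
  "is_weak_grad U u G \<longleftrightarrow> loc_L2 U u \<and> loc_L2 U G \<and>
     (\<forall>\<phi>. test_fun U \<phi> \<longrightarrow> (\<forall>i j.
        (\<integral>z. u z $ i * pderiv_j \<phi> j z \<partial>lebesgue) = - (\<integral>z. G z $ i $ j * \<phi> z \<partial>lebesgue)))"

definition W12_loc :: "pt set \<Rightarrow> (pt \<Rightarrow> pt) \<Rightarrow> bool" where
  "W12_loc U u \<longleftrightarrow> (\<exists>G. is_weak_grad U u G)"

definition wgrad :: "pt set \<Rightarrow> (pt \<Rightarrow> pt) \<Rightarrow> pt \<Rightarrow> mat2" where
  "wgrad U u = (SOME G. is_weak_grad U u G)"

definition symgrad :: "pt set \<Rightarrow> (pt \<Rightarrow> pt) \<Rightarrow> pt \<Rightarrow> mat2" where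
  "symgrad U u z = (1/2) *\<^sub>R (wgrad U u z + transpose (wgrad U u z))"

text \<open>Elastic energy of (u,K) in the set A, the domain being \<Omega>. The Frobenius product
  \<xi>:\<eta> is the inner product on real^2^2.\<close>
definition energy :: "(mat2 \<Rightarrow> mat2) \<Rightarrow> pt set \<Rightarrow> (pt \<Rightarrow> pt) \<Rightarrow> pt set \<Rightarrow> pt set \<Rightarrow> ennreal" where
  "energy C \<Omega> u K A = (\<integral>\<^sup>+ z \<in> A - K. ennreal (C (symgrad (\<Omega> - K) u z) \<bullet> symgrad (\<Omega> - K) u z) \<partial>lebesgue)"

definition elasticity_tensor :: "(mat2 \<Rightarrow> mat2) \<Rightarrow> real \<Rightarrow> bool" where
  "elasticity_tensor C c0 \<longleftrightarrow> linear C \<and> c0 > 0 \<and>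
     (\<forall>\<xi>. transpose (C \<xi>) = C \<xi>) \<and>
     (\<forall>\<xi>. C (\<xi> - transpose \<xi>) = 0) \<and>
     (\<forall>\<xi>. C \<xi> \<bullet> \<xi> \<ge> c0 * (norm (\<xi> + transpose \<xi>))\<^sup>2)"

definition admissible :: "pt set \<Rightarrow> (pt \<Rightarrow> pt) \<Rightarrow> pt set \<Rightarrow> bool" where
  "admissible \<Omega> u K \<longleftrightarrow> K \<subseteq> \<Omega> \<and> closedin (top_of_set \<Omega>) K \<and> W12_loc (\<Omega> - K) u"

definition competitor :: "pt set \<Rightarrow> (pt \<Rightarrow> pt) \<Rightarrow> pt set \<Rightarrow> pt \<Rightarrow> real \<Rightarrow> (pt \<Rightarrow> pt) \<Rightarrow> pt set \<Rightarrow> bool" where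
  "competitor \<Omega> u K x r v L \<longleftrightarrow> admissible \<Omega> v L \<and> L - ball x r = K - ball x r \<and>
     (AE z in lebesgue. z \<in> \<Omega> - (K \<union> ball x r) \<longrightarrow> v z = u z)"

definition gauge :: "(real \<Rightarrow> ennreal) \<Rightarrow> bool" where
  "gauge h \<longleftrightarrow> mono_on {0<..} h \<and> (h \<longlongrightarrow> 0) (at_right 0)"

definition coral :: "pt set \<Rightarrow> bool" where
  "coral K \<longleftrightarrow> (\<forall>x\<in>K. \<forall>r>0. H1 (K \<inter> ball x r) > 0)"

definition loc_finite_energy :: "(mat2 \<Rightarrow> mat2) \<Rightarrow> pt set \<Rightarrow> (pt \<Rightarrow> pt) \<Rightarrow> pt set \<Rightarrow> bool" where
  "loc_finite_energy C \<Omega> u K \<longleftrightarrow> (\<forall>x r. r > 0 \<and> cball x r \<subseteq> \<Omega> \<longrightarrow>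
     energy C \<Omega> u K (ball x r) + H1 (K \<inter> ball x r) < \<infinity>)"

definition griffith_almost_min ::
  "(mat2 \<Rightarrow> mat2) \<Rightarrow> pt set \<Rightarrow> (real \<Rightarrow> ennreal) \<Rightarrow> (pt \<Rightarrow> pt) \<Rightarrow> pt set \<Rightarrow> bool" where
  "griffith_almost_min C \<Omega> h u K \<longleftrightarrow> admissible \<Omega> u K \<and> coral K \<and> loc_finite_energy C \<Omega> u K \<and>
     (\<forall>x r v L. r > 0 \<and> cball x r \<subseteq> \<Omega> \<and> competitor \<Omega> u K x r v L \<longrightarrow>
        energy C \<Omega> u K (ball x r) + H1 (K \<inter> ball x r)
          \<le> energy C \<Omega> v L (ball x r) + H1 (L \<inter> ball x r) + h r * ennreal r)"

definition line_normal :: "pt \<Rightarrow> pt \<Rightarrow> pt set" where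
  "line_normal x \<nu> = {y. (y - x) \<bullet> \<nu> = 0}"

definition flat_dev :: "pt set \<Rightarrow> pt \<Rightarrow> real \<Rightarrow> pt \<Rightarrow> real" where
  "flat_dev F x r \<nu> = (SUP y \<in> F \<inter> ball x r. infdist y (line_normal x \<nu>))"

definition beta :: "pt set \<Rightarrow> pt \<Rightarrow> real \<Rightarrow> real" where
  "beta F x r = (INF \<nu> \<in> {\<nu>. norm \<nu> = 1}. flat_dev F x r \<nu>) / r"

definition Dside :: "pt \<Rightarrow> real \<Rightarrow> pt \<Rightarrow> real \<Rightarrow> real \<Rightarrow> pt set" where
  "Dside x r \<nu> s t = {z \<in> ball x r. s * ((z - x) \<bullet> \<nu>) > t}"

definition separates :: "pt set \<Rightarrow> pt \<Rightarrow> real \<Rightarrow> bool" where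
  "separates F x r \<longleftrightarrow> beta F x r \<le> 1/2 \<and>
     (\<exists>\<nu>. norm \<nu> = 1 \<and> flat_dev F x r \<nu> = beta F x r * r \<and>
        (\<exists>z1 z2. Dside x r \<nu> 1 (beta F x r * r) \<subseteq> connected_component_set (ball x r - F) z1 \<and>
                 Dside x r \<nu> (-1) (beta F x r * r) \<subseteq> connected_component_set (ball x r - F) z2 \<and>
                 connected_component_set (ball x r - F) z1 \<noteq> connected_component_set (ball x r - F) z2))"

definition sep_extension :: "pt set \<Rightarrow> pt \<Rightarrow> real \<Rightarrow> pt set \<Rightarrow> bool" where
  "sep_extension K x0 r0 E \<longleftrightarrow> E \<subseteq> ball x0 r0 \<and> closedin (top_of_set (ball x0 r0)) E \<and>
     coral E \<and> K \<inter> ball x0 r0 \<subseteq> E \<and> beta E x0 r0 = beta K x0 r0 \<and> separates E x0 r0"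

definition min_sep_extension :: "pt set \<Rightarrow> pt \<Rightarrow> real \<Rightarrow> pt set \<Rightarrow> bool" where
  "min_sep_extension K x0 r0 E \<longleftrightarrow> sep_extension K x0 r0 E \<and>
     (\<forall>E'. sep_extension K x0 r0 E' \<longrightarrow> H1 (E - K) \<le> H1 (E' - K))"

definition tau :: real where "tau = 1 / 10^10"

definition good_ball :: "pt set \<Rightarrow> pt set \<Rightarrow> pt \<Rightarrow> real \<Rightarrow> pt \<Rightarrow> real \<Rightarrow> bool" where
  "good_ball K E x0 r0 x t \<longleftrightarrow> x \<in> K \<inter> ball x0 (9*r0/10) \<and> 0 < t \<and> t \<le> r0/10 \<and>
     beta K x t \<le> tau \<and> H1 ((E \<inter> ball x t) - K) \<le> ennreal (tau * t)"

definition sigma :: "pt set \<Rightarrow> pt set \<Rightarrow> pt \<Rightarrow> real \<Rightarrow> pt \<Rightarrow> real" where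
  "sigma K E x0 r0 x = Inf {r. 0 < r \<and> (\<forall>t. r \<le> t \<and> t \<le> r0/10 \<longrightarrow> good_ball K E x0 r0 x t)}"

end

theory Submission
  imports Defs
begin

lemma H1_delta_mono: "A \<subseteq> B \<Longrightarrow> H1_delta \<delta> A \<le> H1_delta \<delta> B"
  unfolding H1_delta_def by (rule INF_superset_mono) auto

lemma H1_mono: "A \<subseteq> B \<Longrightarrow> H1 A \<le> H1 B"
  unfolding H1_def by (rule SUP_mono) (auto intro: H1_delta_mono)

lemma H1_delta_anti: "\<delta>1 \<le> \<delta>2 \<Longrightarrow> H1_delta \<delta>2 A \<le> H1_delta \<delta>1 A"
  unfolding H1_delta_def by (rule INF_superset_mono) (auto intro: order_trans)

lemma H1_delta_le: "\<delta> > 0 \<Longrightarrow> H1_delta \<delta> A \<le> H1 A"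
  unfolding H1_def by (rule SUP_upper) auto

lemma image_interval_bound:
  fixes f :: "pt \<Rightarrow> real"
  assumes lip: "\<And>p q. \<bar>f p - f q\<bar> \<le> dist p q" and bd: "bounded S" and ne: "S \<noteq> {}"
  shows "f ` S \<subseteq> {Inf (f ` S) .. Inf (f ` S) + diameter S}"
proof
  fix v assume "v \<in> f ` S"
  then obtain c where c: "c \<in> S" "v = f c" by auto
  have d: "\<And>c'. c' \<in> S \<Longrightarrow> \<bar>f c - f c'\<bar> \<le> diameter S"
    using order_trans[OF lip diameter_bounded_bound[OF bd c(1)]] by blast
  have bdd: "bdd_below (f ` S)"
    by (rule bdd_belowI2[of _ "f c - diameter S"]) (auto dest: d simp: abs_le_iff)
  have "Inf (f ` S) \<le> f c" using bdd c by (simp add: cInf_lower)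
  moreover have "f c - diameter S \<le> Inf (f ` S)"
    using ne by (intro cINF_greatest) (auto simp: abs_le_iff dest: d)
  ultimately show "v \<in> {Inf (f ` S) .. Inf (f ` S) + diameter S}" using c by auto
qed

lemma H1_lower_lip:
  fixes f :: "pt \<Rightarrow> real"
  assumes lip: "\<And>p q. \<bar>f p - f q\<bar> \<le> dist p q" and sub: "{a<..<b} \<subseteq> f ` A" and ab: "a < b"
  shows "ennreal (b - a) \<le> H1 A"
proof -
  have "ennreal (b - a) \<le> H1_delta 1 A"
    unfolding H1_delta_def
  proof (rule INF_greatest)
    fix C assume "C \<in> {C :: nat \<Rightarrow> pt set. A \<subseteq> (\<Union>i. C i) \<and> (\<forall>i. bounded (C i) \<and> diameter (C i) \<le> 1)}"
    then have cov: "A \<subseteq> (\<Union>i. C i)" and bd: "\<And>i. bounded (C i)" by auto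
    define J where "J i = (if C i = {} then {} else {Inf (f ` C i) .. Inf (f ` C i) + diameter (C i)})" for i
    have fJ: "f ` C i \<subseteq> J i" for i
      using image_interval_bound[OF lip bd] unfolding J_def by auto
    have "{a<..<b} \<subseteq> (\<Union>i. J i)"
    proof
      fix v assume "v \<in> {a<..<b}"
      then obtain p where p: "p \<in> A" "v = f p" using sub by blast
      then obtain i where "p \<in> C i" using cov by blast
      then show "v \<in> (\<Union>i. J i)" using fJ[of i] p by blast
    qed
    have Jm: "J i \<in> sets lborel" for i unfolding J_def by auto
    have "(\<Union>i. J i) \<in> sets lborel" using Jm by auto
    then have "emeasure lborel {a<..<b} \<le> emeasure lborel (\<Union>i. J i)"
      using \<open>{a<..<b} \<subseteq> (\<Union>i. J i)\<close> by (intro emeasure_mono) auto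
    also have "\<dots> \<le> (\<Sum>i. emeasure lborel (J i))"
      using Jm by (intro emeasure_subadditive_countably) auto
    also have "\<dots> \<le> (\<Sum>i. ennreal (diameter (C i)))"
    proof (intro suminf_le)
      fix i show "emeasure lborel (J i) \<le> ennreal (diameter (C i))"
        unfolding J_def by (auto simp: diameter_ge_0 bd)
    qed auto
    finally show "ennreal (b - a) \<le> (\<Sum>i. ennreal (diameter (C i)))" using ab by simp
  qed
  also have "\<dots> \<le> H1 A" by (rule H1_delta_le) simp
  finally show ?thesis .
qed

lemma H1_upper_curve:
  fixes g :: "real \<Rightarrow> pt"
  assumes lip: "\<And>s s'. dist (g s) (g s') \<le> \<bar>s - s'\<bar>" and ab: "a < b" and sub: "A \<subseteq> g ` {a..b}"
  shows "H1 A \<le> ennreal (b - a)"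
  unfolding H1_def
proof (rule SUP_least)
  fix \<delta> :: real assume "\<delta> \<in> {0<..}"
  then have dp: "\<delta> > 0" by simp
  define n :: nat where "n = nat \<lceil>(b - a) / \<delta>\<rceil> + 1"
  have n1: "n \<ge> 1" unfolding n_def by simp
  have "(b - a) / \<delta> \<le> real n" unfolding n_def by linarith
  then have "b - a \<le> real n * \<delta>" using dp by (simp add: field_simps)
  define h where "h = (b - a) / n"
  have hp: "h > 0" using ab n1 unfolding h_def by simp
  have hd: "h \<le> \<delta>" unfolding h_def using \<open>b - a \<le> real n * \<delta>\<close> n1 by (simp add: field_simps)
  have nh: "real n * h = b - a" unfolding h_def using n1 by simp
  define C where "C i = (if i < n then g ` {a + i*h .. a + (real i + 1)*h} else {})" for i
  have diam: "diameter (C i) \<le> (if i < n then h else 0)" for i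
  proof (cases "i < n")
    case True
    have "diameter (C i) \<le> h"
      unfolding C_def using True
      apply (intro diameter_le)
       apply (simp add: hp less_imp_le)
      apply clarsimp
      subgoal for s s'
        using lip[of s s'] by (simp add: dist_norm algebra_simps abs_le_iff)
      done
    then show ?thesis using True by simp
  qed (simp add: C_def)
  have bdd: "bounded (C i)" for i
  proof (cases "i < n")
    case True
    have "C i \<subseteq> cball (g (a + i*h)) h"
    proof
      fix z assume "z \<in> C i"
      then have "z \<in> g ` {a + i*h .. a + (real i + 1)*h}" using True unfolding C_def by meson
      then obtain s where s: "s \<in> {a + i*h .. a + (real i + 1)*h}" "z = g s" by blast
      have "dist (g (a + i*h)) z \<le> \<bar>a + i*h - s\<bar>" using lip s(2) by simp
      also have "\<dots> \<le> h" using s by (auto simp: algebra_simps)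
      finally show "z \<in> cball (g (a + i*h)) h" by simp
    qed
    then show ?thesis using bounded_subset bounded_cball by blast
  qed (simp add: C_def)
  have cov: "A \<subseteq> (\<Union>i. C i)"
  proof
    fix z assume "z \<in> A"
    then obtain s where s: "s \<in> {a..b}" "z = g s" using sub by auto
    have "\<exists>i<n. a + i*h \<le> s \<and> s \<le> a + (real i + 1)*h"
    proof (cases "s = b")
      case True
      then show ?thesis using n1 nh
        by (intro exI[of _ "n - 1"]) (auto simp: algebra_simps of_nat_diff hp less_imp_le)
    next
      case False
      define i where "i = nat \<lfloor>(s - a) / h\<rfloor>"
      have sa: "(s - a) / h \<ge> 0" using s hp by simp
      have i1: "real i \<le> (s - a) / h" unfolding i_def using sa by linarith
      have i2: "(s - a) / h < real i + 1" unfolding i_def using sa by linarith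
      have "(s - a) / h < n" using False s nh hp by (simp add: field_simps)
      then have "i < n" using i1 unfolding i_def using sa by linarith
      moreover have "a + i*h \<le> s" using i1 hp by (simp add: field_simps)
      moreover have "s \<le> a + (real i + 1)*h" using i2 hp by (simp add: field_simps)
      ultimately show ?thesis by blast
    qed
    then obtain i where "i < n" "a + i*h \<le> s" "s \<le> a + (real i + 1)*h" by blast
    then show "z \<in> (\<Union>i. C i)" using s unfolding C_def by auto
  qed
  have "H1_delta \<delta> A \<le> (\<Sum>i. ennreal (diameter (C i)))"
    unfolding H1_delta_def
  proof (intro INF_lower, safe)
    fix i show "diameter (C i) \<le> \<delta>" using diam[of i] hd dp by (auto split: if_splits)
  qed (use cov bdd in auto)
  also have "\<dots> = (\<Sum>i<n. ennreal (diameter (C i)))"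
    by (rule suminf_finite) (auto simp: C_def)
  also have "\<dots> \<le> (\<Sum>i<n. ennreal h)"
  proof (intro sum_mono)
    fix i assume "i \<in> {..<n}" then show "ennreal (diameter (C i)) \<le> ennreal h" using diam[of i] by (intro ennreal_leI) simp
  qed
  also have "\<dots> = of_nat n * ennreal h" by simp
  also have "\<dots> = ennreal (real n) * ennreal h" by (simp add: ennreal_of_nat_eq_real_of_nat)
  also have "\<dots> = ennreal (real n * h)" using hp by (simp add: ennreal_mult)
  also have "\<dots> = ennreal (b - a)" using nh by simp
  finally show "H1_delta \<delta> A \<le> ennreal (b - a)" .
qed

lemma H1_delta_add_sep:
  assumes "\<delta> < \<eta>" and sep: "\<And>p q. p \<in> A \<Longrightarrow> q \<in> B \<Longrightarrow> \<eta> \<le> dist p q"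
  shows "H1_delta \<delta> A + H1_delta \<delta> B \<le> H1_delta \<delta> (A \<union> B)"
  unfolding H1_delta_def[of \<delta> "A \<union> B"]
proof (rule INF_greatest)
  fix C assume "C \<in> {C :: nat \<Rightarrow> pt set. A \<union> B \<subseteq> (\<Union>i. C i) \<and> (\<forall>i. bounded (C i) \<and> diameter (C i) \<le> \<delta>)}"
  then have cov: "A \<union> B \<subseteq> (\<Union>i. C i)" and bd: "\<And>i. bounded (C i)" and dm: "\<And>i. diameter (C i) \<le> \<delta>" by auto
  define CA where "CA i = (if C i \<inter> A \<noteq> {} then C i else {})" for i
  define CB where "CB i = (if C i \<inter> B \<noteq> {} then C i else {})" for i
  have d0: "0 \<le> \<delta>" using dm[of 0] diameter_ge_0[OF bd[of 0]] by linarith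
  have f1: "H1_delta \<delta> A \<le> (\<Sum>i. ennreal (diameter (CA i)))"
    unfolding H1_delta_def
  proof (rule INF_lower, safe)
    fix i show "bounded (CA i)" using bd by (simp add: CA_def)
    show "diameter (CA i) \<le> \<delta>" using dm[of i] d0 unfolding CA_def by simp
  next
    fix x assume x: "x \<in> A"
    then obtain i where "x \<in> C i" using cov by auto
    then have "x \<in> CA i" using x unfolding CA_def by auto
    then show "x \<in> (\<Union>i. CA i)" by auto
  qed
  have f2: "H1_delta \<delta> B \<le> (\<Sum>i. ennreal (diameter (CB i)))"
    unfolding H1_delta_def
  proof (rule INF_lower, safe)
    fix i show "bounded (CB i)" using bd by (simp add: CB_def)
    show "diameter (CB i) \<le> \<delta>" using dm[of i] d0 unfolding CB_def by simp
  next
    fix x assume x: "x \<in> B"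
    then obtain i where "x \<in> C i" using cov by auto
    then have "x \<in> CB i" using x unfolding CB_def by auto
    then show "x \<in> (\<Union>i. CB i)" by auto
  qed
  have "H1_delta \<delta> A + H1_delta \<delta> B \<le> (\<Sum>i. ennreal (diameter (CA i))) + (\<Sum>i. ennreal (diameter (CB i)))"
    by (rule add_mono[OF f1 f2])
  also have "(\<Sum>i. ennreal (diameter (CA i))) + (\<Sum>i. ennreal (diameter (CB i)))
      = (\<Sum>i. ennreal (diameter (CA i)) + ennreal (diameter (CB i)))"
    by (intro suminf_add summableI)
  also have "\<dots> \<le> (\<Sum>i. ennreal (diameter (C i)))"
  proof (intro suminf_le summableI)
    fix i
    have "\<not> (C i \<inter> A \<noteq> {} \<and> C i \<inter> B \<noteq> {})"
    proof
      assume "C i \<inter> A \<noteq> {} \<and> C i \<inter> B \<noteq> {}"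
      then obtain p q where "p \<in> C i \<inter> A" "q \<in> C i \<inter> B" by blast
      then have "dist p q \<le> diameter (C i)" "\<eta> \<le> dist p q" using diameter_bounded_bound[OF bd] sep by auto
      then show False using dm[of i] \<open>\<delta> < \<eta>\<close> by linarith
    qed
    then show "ennreal (diameter (CA i)) + ennreal (diameter (CB i)) \<le> ennreal (diameter (C i))"
      unfolding CA_def CB_def by auto
  qed
  finally show "H1_delta \<delta> A + H1_delta \<delta> B \<le> (\<Sum>i. ennreal (diameter (C i)))" .
qed

lemma H1_add_sep:
  assumes "\<eta> > 0" and sep: "\<And>p q. p \<in> A \<Longrightarrow> q \<in> B \<Longrightarrow> \<eta> \<le> dist p q"
  shows "H1 A + H1 B \<le> H1 (A \<union> B)"
proof -
  have key: "H1_delta d1 A + H1_delta d2 B \<le> H1 (A \<union> B)" if "d1 > 0" "d2 > 0" for d1 d2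
  proof -
    define m where "m = min (min d1 d2) (\<eta>/2)"
    have m: "m > 0" "m \<le> d1" "m \<le> d2" "m < \<eta>" using that \<open>\<eta> > 0\<close> unfolding m_def by auto
    have "H1_delta d1 A + H1_delta d2 B \<le> H1_delta m A + H1_delta m B"
      using m by (intro add_mono H1_delta_anti)
    also have "\<dots> \<le> H1_delta m (A \<union> B)" using m sep by (intro H1_delta_add_sep) auto
    also have "\<dots> \<le> H1 (A \<union> B)" using m by (intro H1_delta_le)
    finally show ?thesis .
  qed
  have "H1 A + H1 B = (SUP d1\<in>{0<..}. H1_delta d1 A + H1 B)"
    unfolding H1_def[of A] by (subst ennreal_SUP_add_left) auto
  also have "\<dots> \<le> H1 (A \<union> B)"
  proof (rule SUP_least)
    fix d1 :: real assume d1: "d1 \<in> {0<..}"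
    have "H1_delta d1 A + H1 B = (SUP d2\<in>{0<..}. H1_delta d1 A + H1_delta d2 B)"
      unfolding H1_def[of B] by (subst ennreal_SUP_add_right) auto
    also have "\<dots> \<le> H1 (A \<union> B)" using key d1 by (intro SUP_least) auto
    finally show "H1_delta d1 A + H1 B \<le> H1 (A \<union> B)" .
  qed
  finally show ?thesis .
qed

lemma x_in_line: "x \<in> line_normal x \<nu>" unfolding line_normal_def by simp

lemma infdist_line:
  assumes "norm \<nu> = 1"
  shows "infdist z (line_normal x \<nu>) = \<bar>(z - x) \<bullet> \<nu>\<bar>"
proof (rule antisym)
  define p where "p = z - ((z - x) \<bullet> \<nu>) *\<^sub>R \<nu>"
  have nn: "\<nu> \<bullet> \<nu> = 1" using assms by (simp add: dot_square_norm)
  have "p \<in> line_normal x \<nu>" unfolding p_def line_normal_def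
    by (simp add: inner_diff_left nn algebra_simps)
  then have "infdist z (line_normal x \<nu>) \<le> dist z p" by (rule infdist_le)
  also have "\<dots> = \<bar>(z - x) \<bullet> \<nu>\<bar>" unfolding p_def dist_norm using assms by simp
  finally show "infdist z (line_normal x \<nu>) \<le> \<bar>(z - x) \<bullet> \<nu>\<bar>" .
next
  have ne: "line_normal x \<nu> \<noteq> {}" using x_in_line by auto
  show "\<bar>(z - x) \<bullet> \<nu>\<bar> \<le> infdist z (line_normal x \<nu>)"
    unfolding infdist_def using ne
  proof (simp, intro cINF_greatest)
    fix q assume "q \<in> line_normal x \<nu>"
    then have "(q - x) \<bullet> \<nu> = 0" unfolding line_normal_def by simp
    then have "(z - x) \<bullet> \<nu> = (z - q) \<bullet> \<nu>" by (simp add: inner_diff_left)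
    also have "\<bar>\<dots>\<bar> \<le> norm (z - q) * norm \<nu>" by (rule Cauchy_Schwarz_ineq2)
    finally show "\<bar>(z - x) \<bullet> \<nu>\<bar> \<le> dist z q" using assms by (simp add: dist_norm)
  qed simp
qed


lemma fd_bdd: "bdd_above ((\<lambda>y. infdist y (line_normal x \<nu>)) ` (F \<inter> ball x r))"
proof (rule bdd_aboveI2)
  fix y assume "y \<in> F \<inter> ball x r"
  then have "infdist y (line_normal x \<nu>) \<le> dist y x" using infdist_le[OF x_in_line] by blast
  then show "infdist y (line_normal x \<nu>) \<le> r" using \<open>y \<in> F \<inter> ball x r\<close> by (simp add: dist_commute)
qed

lemma fd_upper: "y \<in> F \<inter> ball x r \<Longrightarrow> infdist y (line_normal x \<nu>) \<le> flat_dev F x r \<nu>"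
  unfolding flat_dev_def using fd_bdd by (rule cSUP_upper2) auto

lemma fd_least: "F \<inter> ball x r \<noteq> {} \<Longrightarrow> (\<And>y. y \<in> F \<inter> ball x r \<Longrightarrow> infdist y (line_normal x \<nu>) \<le> c)
   \<Longrightarrow> flat_dev F x r \<nu> \<le> c"
  unfolding flat_dev_def by (rule cSUP_least) auto

lemma fd_nonneg: "F \<inter> ball x r \<noteq> {} \<Longrightarrow> 0 \<le> flat_dev F x r \<nu>"
  using fd_upper infdist_nonneg by (meson all_not_in_conv order_trans)

lemma fd_mono: "F \<inter> ball x r \<noteq> {} \<Longrightarrow> F \<inter> ball x r \<subseteq> G \<Longrightarrow> flat_dev F x r \<nu> \<le> flat_dev G x r \<nu>"
proof (rule fd_least)
  fix y assume "F \<inter> ball x r \<subseteq> G" "y \<in> F \<inter> ball x r"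
  then show "infdist y (line_normal x \<nu>) \<le> flat_dev G x r \<nu>" by (intro fd_upper) auto
qed

lemma unit_ex: "{\<nu> :: pt. norm \<nu> = 1} \<noteq> {}"
proof -
  have "norm (axis 1 1 :: pt) = 1" by simp
  then show ?thesis by blast
qed

lemma fd_bdd_below: "F \<inter> ball x r \<noteq> {} \<Longrightarrow> bdd_below ((\<lambda>\<nu>. flat_dev F x r \<nu>) ` U)"
  by (rule bdd_belowI2[of _ 0]) (rule fd_nonneg)

lemma beta_le: "F \<inter> ball x r \<noteq> {} \<Longrightarrow> r > 0 \<Longrightarrow> norm \<nu> = 1 \<Longrightarrow> beta F x r \<le> flat_dev F x r \<nu> / r"
  unfolding beta_def
  by (intro divide_right_mono cINF_lower fd_bdd_below) auto

lemma beta_lt: "F \<inter> ball x r \<noteq> {} \<Longrightarrow> r > 0 \<Longrightarrow> beta F x r * r < c \<Longrightarrow>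
   \<exists>\<nu>. norm \<nu> = 1 \<and> flat_dev F x r \<nu> < c"
  unfolding beta_def using cINF_less_iff[OF unit_ex fd_bdd_below, of F x r c] by auto

lemma beta_ge: "F \<inter> ball x r \<noteq> {} \<Longrightarrow> r > 0 \<Longrightarrow> (\<And>\<nu>. norm \<nu> = 1 \<Longrightarrow> c \<le> flat_dev F x r \<nu>) \<Longrightarrow> c / r \<le> beta F x r"
  unfolding beta_def
  by (intro divide_right_mono cINF_greatest unit_ex) auto

lemma beta_mono: "F \<inter> ball x r \<noteq> {} \<Longrightarrow> F \<inter> ball x r \<subseteq> G \<Longrightarrow> r > 0 \<Longrightarrow> beta F x r \<le> beta G x r"
proof -
  assume a: "F \<inter> ball x r \<noteq> {}" "F \<inter> ball x r \<subseteq> G" "r > 0"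
  have "beta F x r * r / r \<le> beta G x r"
  proof (rule beta_ge)
    show "G \<inter> ball x r \<noteq> {}" using a by auto
    fix \<nu> :: pt assume "norm \<nu> = 1"
    have "beta F x r \<le> flat_dev F x r \<nu> / r" using a \<open>norm \<nu> = 1\<close> by (intro beta_le)
    then have "beta F x r * r \<le> flat_dev F x r \<nu>" using a by (simp add: field_simps)
    also have "\<dots> \<le> flat_dev G x r \<nu>" using a by (intro fd_mono) auto
    finally show "beta F x r * r \<le> flat_dev G x r \<nu>" .
  qed (use a in auto)
  then show ?thesis using a by simp
qed

lemma beta_nonneg: "F \<inter> ball x r \<noteq> {} \<Longrightarrow> r > 0 \<Longrightarrow> 0 \<le> beta F x r"
  using beta_ge[of F x r 0] fd_nonneg by auto

definition perp :: "pt \<Rightarrow> pt" where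
  "perp \<nu> = (\<chi> i. if i = 1 then - (\<nu> $ 2) else \<nu> $ 1)"

lemma perp_inner: "perp \<nu> \<bullet> \<nu> = 0"
  unfolding perp_def inner_vec_def by (simp add: sum_2)

lemma perp_norm: "norm (perp \<nu>) = norm \<nu>"
proof -
  have "perp \<nu> \<bullet> perp \<nu> = \<nu> \<bullet> \<nu>" unfolding perp_def inner_vec_def by (simp add: sum_2)
  then show ?thesis by (metis norm_eq_sqrt_inner)
qed

lemma perp_decomp:
  assumes "norm \<nu> = 1"
  shows "z = (z \<bullet> \<nu>) *\<^sub>R \<nu> + (z \<bullet> perp \<nu>) *\<^sub>R perp \<nu>"
proof -
  have nn: "\<nu>$1 * \<nu>$1 + \<nu>$2 * \<nu>$2 = 1"
    using assms by (metis dot_square_norm inner_vec_def sum_2 inner_real_def power_one)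
  have e1: "(z$1 * \<nu>$1 + z$2 * \<nu>$2) * \<nu>$1 + (- (z$1 * \<nu>$2) + z$2 * \<nu>$1) * - \<nu>$2 = z$1 * (\<nu>$1 * \<nu>$1 + \<nu>$2 * \<nu>$2)"
    by (simp add: algebra_simps)
  have e2: "(z$1 * \<nu>$1 + z$2 * \<nu>$2) * \<nu>$2 + (- (z$1 * \<nu>$2) + z$2 * \<nu>$1) * \<nu>$1 = z$2 * (\<nu>$1 * \<nu>$1 + \<nu>$2 * \<nu>$2)"
    by (simp add: algebra_simps)
  show ?thesis
    unfolding perp_def inner_vec_def vec_eq_iff forall_2
    using e1 e2 nn by (simp add: sum_2 algebra_simps)
qed

lemma line_H1_upper:
  assumes "norm \<nu> = 1" "r > 0"
  shows "H1 (line_normal x \<nu> \<inter> ball x r) \<le> ennreal (2 * r)"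
proof -
  define g where "g s = x + s *\<^sub>R perp \<nu>" for s
  have pn: "norm (perp \<nu>) = 1" using assms perp_norm by simp
  have "H1 (line_normal x \<nu> \<inter> ball x r) \<le> ennreal (r - (-r))"
  proof (rule H1_upper_curve[of g])
    fix s s' show "dist (g s) (g s') \<le> \<bar>s - s'\<bar>"
      unfolding g_def dist_norm using pn by (simp add: scaleR_diff_left[symmetric])
  next
    show "- r < r" using assms by simp
  next
    show "line_normal x \<nu> \<inter> ball x r \<subseteq> g ` {- r..r}"
    proof
      fix p assume p: "p \<in> line_normal x \<nu> \<inter> ball x r"
      then have "(p - x) \<bullet> \<nu> = 0" unfolding line_normal_def by simp
      then have eq: "p - x = ((p - x) \<bullet> perp \<nu>) *\<^sub>R perp \<nu>" using perp_decomp[OF assms(1), of "p - x"] by simp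
      have "\<bar>(p - x) \<bullet> perp \<nu>\<bar> \<le> norm (p - x) * norm (perp \<nu>)" by (rule Cauchy_Schwarz_ineq2)
      also have "\<dots> < r" using p pn by (simp add: dist_norm norm_minus_commute)
      finally have "(p - x) \<bullet> perp \<nu> \<in> {-r..r}" by auto
      moreover have "p = g ((p - x) \<bullet> perp \<nu>)" unfolding g_def using eq by (metis add.commute diff_add_cancel)
      ultimately show "p \<in> g ` {- r..r}" by blast
    qed
  qed
  then show ?thesis by simp
qed

lemma line_H1_lower:
  assumes "norm \<nu> = 1" "s > 0" "z \<in> line_normal x \<nu>"
  shows "ennreal s \<le> H1 (line_normal x \<nu> \<inter> ball z s)"
proof -
  define f where "f p = (p - z) \<bullet> perp \<nu>" for p
  have pn: "norm (perp \<nu>) = 1" using assms perp_norm by simp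
  have "ennreal (s - 0) \<le> H1 (line_normal x \<nu> \<inter> ball z s)"
  proof (rule H1_lower_lip[of f])
    fix p q
    have "\<bar>f p - f q\<bar> = \<bar>(p - q) \<bullet> perp \<nu>\<bar>" unfolding f_def by (simp add: inner_diff_left)
    also have "\<dots> \<le> norm (p - q) * norm (perp \<nu>)" by (rule Cauchy_Schwarz_ineq2)
    finally show "\<bar>f p - f q\<bar> \<le> dist p q" using pn by (simp add: dist_norm)
  next
    show "0 < s" by fact
  next
    show "{0<..<s} \<subseteq> f ` (line_normal x \<nu> \<inter> ball z s)"
    proof
      fix a assume a: "a \<in> {0<..<s}"
      define p where "p = z + a *\<^sub>R perp \<nu>"
      have "(z - x) \<bullet> \<nu> = 0" using assms(3) unfolding line_normal_def by simp
      then have "p \<in> line_normal x \<nu>" unfolding p_def line_normal_def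
        by (simp add: inner_diff_left inner_add_left perp_inner)
      moreover have "p \<in> ball z s" unfolding p_def using a pn by (simp add: dist_norm)
      moreover have "f p = a" unfolding f_def p_def using pn by (simp add: dot_square_norm)
      ultimately show "a \<in> f ` (line_normal x \<nu> \<inter> ball z s)" by force
    qed
  qed
  then show ?thesis by simp
qed

lemma island_components:
  fixes W U :: "pt set"
  assumes oW: "open W" and WU: "W \<subseteq> U" and UW: "U - W \<subseteq> ball y r" and bU: "ball y r \<subseteq> U"
    and SW: "sphere y r \<subseteq> W" and r: "r > 0"
    and w: "w1 \<in> W" "w2 \<in> W" "w1 \<notin> cball y r" "w2 \<notin> cball y r"
    and ne: "connected_component_set W w1 \<noteq> connected_component_set W w2"
  shows "connected_component_set U w1 \<noteq> connected_component_set U w2"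
proof
  assume eqU: "connected_component_set U w1 = connected_component_set U w2"
  define P where "P = connected_component_set W w1"
  define Ps where "Ps = P \<union> (if sphere y r \<subseteq> P then ball y r else {})"
  have oP: "open P" unfolding P_def using oW by (rule open_connected_component)
  have oPs: "open Ps" unfolding Ps_def using oP by auto
  have w1P: "w1 \<in> P" unfolding P_def using w by simp
  have cS: "connected (sphere y r)" by (rule connected_sphere) simp
  have cP: "connected P" unfolding P_def by simp
  have front: "frontier (ball y r) = sphere y r" using r by simp
  have sub: "U \<subseteq> Ps \<union> interior (- Ps)"
  proof
    fix q assume qU: "q \<in> U"
    show "q \<in> Ps \<union> interior (- Ps)"
    proof (cases "q \<in> Ps")
      case True then show ?thesis by simp
    next
      case qPs: False
      show ?thesis
      proof (cases "q \<in> W")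
        case True
        define Q where "Q = connected_component_set W q"
        have oQ: "open Q" unfolding Q_def using oW by (rule open_connected_component)
        have qQ: "q \<in> Q" unfolding Q_def using True by simp
        have cQ: "connected Q" unfolding Q_def by simp
        have QP: "Q \<inter> P = {}"
        proof (rule ccontr)
          assume "Q \<inter> P \<noteq> {}"
          then have "Q = P" unfolding Q_def P_def using connected_component_nonoverlap by blast
          then show False using qQ qPs unfolding Ps_def by auto
        qed
        have "Q \<inter> Ps = {}"
        proof (cases "sphere y r \<subseteq> P")
          case True
          have "Q \<inter> ball y r = {}"
          proof (rule ccontr)
            assume a: "Q \<inter> ball y r \<noteq> {}"
            have "q \<notin> ball y r" using qPs True unfolding Ps_def by auto
            then have "Q - ball y r \<noteq> {}" using qQ by blast
            then have "Q \<inter> frontier (ball y r) \<noteq> {}" using connected_Int_frontier[OF cQ a] by blast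
            then show False using QP True front by blast
          qed
          then show ?thesis using QP unfolding Ps_def by auto
        next
          case False then show ?thesis using QP unfolding Ps_def by auto
        qed
        then have "q \<in> interior (- Ps)" using oQ qQ by (intro interiorI[of Q]) auto
        then show ?thesis by simp
      next
        case False
        then have qb: "q \<in> ball y r" using qU UW by blast
        have nS: "\<not> sphere y r \<subseteq> P" using qb qPs unfolding Ps_def by auto
        have SP: "sphere y r \<inter> P = {}"
        proof (rule ccontr)
          assume "sphere y r \<inter> P \<noteq> {}"
          then obtain s where s: "s \<in> sphere y r" "s \<in> P" by blast
          have "sphere y r \<subseteq> connected_component_set W s"
            using s(1) cS SW by (rule connected_component_maximal)
          also have "\<dots> = P" unfolding P_def using s(2) P_def connected_component_eq by blast
          finally show False using nS by simp
        qed
        have Pb: "P \<inter> ball y r = {}"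
        proof (rule ccontr)
          assume a: "P \<inter> ball y r \<noteq> {}"
          have "P - ball y r \<noteq> {}" using w1P w by auto
          then have "P \<inter> frontier (ball y r) \<noteq> {}" using connected_Int_frontier[OF cP a] by blast
          then show False using SP front by blast
        qed
        have "ball y r \<subseteq> - Ps" using Pb nS unfolding Ps_def by auto
        then have "q \<in> interior (- Ps)" using qb by (intro interiorI[of "ball y r"]) auto
        then show ?thesis by simp
      qed
    qed
  qed
  define T where "T = connected_component_set U w1"
  have cT: "connected T" unfolding T_def by simp
  have w1U: "w1 \<in> U" "w2 \<in> U" using w WU by auto
  have w2T: "w2 \<in> T" unfolding T_def eqU using w1U by simp
  have w1T: "w1 \<in> T" unfolding T_def using w1U by simp
  have TU: "T \<subseteq> U" unfolding T_def by (rule connected_component_subset)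
  have "Ps \<inter> T = {} \<or> interior (- Ps) \<inter> T = {}"
    using cT oPs open_interior TU sub interior_subset[of "- Ps"]
    by (intro connectedD) auto
  moreover have "Ps \<inter> T \<noteq> {}" using w1T w1P unfolding Ps_def by auto
  ultimately have "T \<subseteq> Ps" using TU sub by blast
  then have "w2 \<in> P" using w2T w unfolding Ps_def by (auto split: if_splits)
  then have "connected_component_set W w2 = P" unfolding P_def by (rule connected_component_eq)
  then show False using ne unfolding P_def by simp
qed

lemma Dside_connected: "connected (Dside x r \<nu> 1 b)"
proof -
  have "Dside x r \<nu> 1 b = ball x r \<inter> {z. inner \<nu> z > b + inner \<nu> x}"
    unfolding Dside_def by (auto simp: inner_diff_left inner_diff_right inner_commute[of _ \<nu>])
  moreover have "convex (ball x r \<inter> {z. inner \<nu> z > b + inner \<nu> x})"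
    by (intro convex_Int convex_ball convex_halfspace_gt)
  ultimately show ?thesis by (simp add: convex_connected)
qed

lemma Dside_connected': "connected (Dside x r \<nu> (-1) b)"
proof -
  have "Dside x r \<nu> (-1) b = ball x r \<inter> {z. inner \<nu> z < inner \<nu> x - b}"
    unfolding Dside_def by (auto simp: inner_diff_left inner_diff_right inner_commute[of _ \<nu>])
  moreover have "convex (ball x r \<inter> {z. inner \<nu> z < inner \<nu> x - b})"
    by (intro convex_Int convex_ball convex_halfspace_lt)
  ultimately show ?thesis by (simp add: convex_connected)
qed

lemma sep_flat:
  assumes "sep_extension K x0 r0 E" "p \<in> E" "x0 \<in> K" "r0 > 0"
    and "norm \<nu> = 1" "flat_dev E x0 r0 \<nu> = beta E x0 r0 * r0"
  shows "\<bar>(p - x0) \<bullet> \<nu>\<bar> \<le> beta E x0 r0 * r0"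
proof -
  have "p \<in> E \<inter> ball x0 r0" using assms unfolding sep_extension_def by auto
  then have "infdist p (line_normal x0 \<nu>) \<le> flat_dev E x0 r0 \<nu>" by (rule fd_upper)
  then show ?thesis using assms infdist_line by simp
qed

lemma ext_finite:
  assumes r0: "r0 > 0" and x0K: "x0 \<in> K"
    and Kc: "closedin (top_of_set (ball x0 r0)) (K \<inter> ball x0 r0)" and cK: "coral K"
    and sepE: "sep_extension K x0 r0 E"
    and minE: "\<forall>E'. sep_extension K x0 r0 E' \<longrightarrow> H1 (E - K) \<le> H1 (E' - K)"
  shows "H1 (E - K) < \<infinity>"
proof -
  from sepE have Esub: "E \<subseteq> ball x0 r0" and KE: "K \<inter> ball x0 r0 \<subseteq> E"
    and bEK: "beta E x0 r0 = beta K x0 r0" and sepa: "separates E x0 r0"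
    unfolding sep_extension_def by auto
  from sepa obtain \<nu> where nu: "norm \<nu> = 1" "flat_dev E x0 r0 \<nu> = beta E x0 r0 * r0"
    and bhalf: "beta E x0 r0 \<le> 1/2"
    unfolding separates_def by auto
  define L where "L = line_normal x0 \<nu>"
  define Ec where "Ec = (K \<inter> ball x0 r0) \<union> (L \<inter> ball x0 r0)"
  have x0b: "x0 \<in> K \<inter> ball x0 r0" using x0K r0 by simp
  have Ecne: "K \<inter> ball x0 r0 \<noteq> {}" using x0b by blast
  have Lflat: "\<And>p. p \<in> L \<Longrightarrow> (p - x0) \<bullet> \<nu> = 0" unfolding L_def line_normal_def by simp
  have Kflat: "\<bar>(p - x0) \<bullet> \<nu>\<bar> \<le> beta E x0 r0 * r0" if "p \<in> K \<inter> ball x0 r0" for p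
    using sep_flat[OF sepE _ x0K r0 nu] that KE by blast
  have Ecflat: "\<bar>(p - x0) \<bullet> \<nu>\<bar> \<le> beta E x0 r0 * r0" if "p \<in> Ec" for p
  proof -
    have "0 \<le> beta E x0 r0" using beta_nonneg[of E x0 r0] x0b KE r0 by blast
    then have "0 \<le> beta E x0 r0 * r0" using r0 by simp
    then show ?thesis using that Kflat Lflat unfolding Ec_def by auto
  qed
  have fdE: "flat_dev Ec x0 r0 \<nu> \<le> beta E x0 r0 * r0"
  proof (rule fd_least)
    show "Ec \<inter> ball x0 r0 \<noteq> {}" unfolding Ec_def using x0b by blast
    fix y assume "y \<in> Ec \<inter> ball x0 r0"
    then show "infdist y (line_normal x0 \<nu>) \<le> beta E x0 r0 * r0"
      using Ecflat infdist_line[OF nu(1)] by simp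
  qed
  have bEc1: "beta K x0 r0 \<le> beta Ec x0 r0"
    using Ecne r0 unfolding Ec_def by (intro beta_mono) auto
  have bEc2: "beta Ec x0 r0 \<le> flat_dev Ec x0 r0 \<nu> / r0"
    using x0b r0 nu unfolding Ec_def by (intro beta_le) auto
  have h1: "beta Ec x0 r0 * r0 \<le> flat_dev Ec x0 r0 \<nu>" using bEc2 r0 by (simp add: field_simps)
  have h2: "flat_dev Ec x0 r0 \<nu> \<le> beta K x0 r0 * r0" using fdE bEK by simp
  have "beta Ec x0 r0 * r0 \<le> beta K x0 r0 * r0" using h1 h2 by linarith
  then have "beta Ec x0 r0 \<le> beta K x0 r0" using r0 by (rule mult_right_le_imp_le)
  then have bEc: "beta Ec x0 r0 = beta K x0 r0" using bEc1 by simp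
  have fdEc: "flat_dev Ec x0 r0 \<nu> = beta Ec x0 r0 * r0"
    using bEc2 fdE bEc bEK r0 by (simp add: field_simps)
  have sepc: "sep_extension K x0 r0 Ec"
    unfolding sep_extension_def
  proof (intro conjI)
    show "Ec \<subseteq> ball x0 r0" unfolding Ec_def by auto
    have "L = {y. inner \<nu> y = inner \<nu> x0}" unfolding L_def line_normal_def
      by (auto simp: inner_diff_left inner_diff_right inner_commute[of _ \<nu>])
    then have "closed L" using closed_hyperplane[of \<nu> "\<nu> \<bullet> x0"] by simp
    then show "closedin (top_of_set (ball x0 r0)) Ec"
      unfolding Ec_def using Kc closedin_closed_Int[of L "ball x0 r0"] by (auto simp: Int_commute)
    show "K \<inter> ball x0 r0 \<subseteq> Ec" unfolding Ec_def by auto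
    show "beta Ec x0 r0 = beta K x0 r0" by (rule bEc)
    show "coral Ec"
      unfolding coral_def
    proof (intro ballI allI impI)
      fix z and r' :: real assume z: "z \<in> Ec" and r': "r' > 0"
      define s where "s = min r' (r0 - dist x0 z)"
      have zb: "z \<in> ball x0 r0" using z unfolding Ec_def by auto
      then have sp: "s > 0" unfolding s_def using r' by simp
      have bs: "ball z s \<subseteq> ball z r' \<inter> ball x0 r0"
      proof
        fix q assume q: "q \<in> ball z s"
        then have "dist z q < r'" "dist z q < r0 - dist x0 z" unfolding s_def by auto
        moreover have "dist x0 q \<le> dist x0 z + dist z q" by (rule dist_triangle)
        ultimately show "q \<in> ball z r' \<inter> ball x0 r0" by simp
      qed
      show "H1 (Ec \<inter> ball z r') > 0"
      proof (cases "z \<in> K")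
        case True
        have "0 < H1 (K \<inter> ball z s)" using cK True sp unfolding coral_def by blast
        also have "\<dots> \<le> H1 (Ec \<inter> ball z r')" using bs unfolding Ec_def by (intro H1_mono) auto
        finally show ?thesis .
      next
        case False
        then have zL: "z \<in> L" using z unfolding Ec_def by auto
        have "0 < ennreal s" using sp by simp
        also have "\<dots> \<le> H1 (L \<inter> ball z s)" unfolding L_def using nu(1) sp zL L_def by (intro line_H1_lower) auto
        also have "\<dots> \<le> H1 (Ec \<inter> ball z r')" using bs unfolding Ec_def by (intro H1_mono) auto
        finally show ?thesis .
      qed
    qed
    show "separates Ec x0 r0"
      unfolding separates_def
    proof (intro conjI exI)
      show "beta Ec x0 r0 \<le> 1/2" using bEc bEK bhalf by simp
      show "norm \<nu> = 1" by (rule nu)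
      show "flat_dev Ec x0 r0 \<nu> = beta Ec x0 r0 * r0" by (rule fdEc)
      define b where "b = beta Ec x0 r0 * r0"
      have bb: "b \<le> r0/2" using bEc bEK bhalf r0 unfolding b_def by (simp add: mult_right_mono[of _ "1/2" r0, simplified])
      have Ecb: "\<bar>(p - x0) \<bullet> \<nu>\<bar> \<le> b" if "p \<in> Ec" for p using Ecflat that bEc bEK unfolding b_def by simp
      define z1 where "z1 = x0 + (3/4 * r0) *\<^sub>R \<nu>"
      define z2 where "z2 = x0 - (3/4 * r0) *\<^sub>R \<nu>"
      have nn: "\<nu> \<bullet> \<nu> = 1" using nu by (simp add: dot_square_norm)
      have z1D: "z1 \<in> Dside x0 r0 \<nu> 1 b"
        unfolding Dside_def z1_def using r0 nu bb by (simp add: inner_add_left nn dist_norm)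
      have z2D: "z2 \<in> Dside x0 r0 \<nu> (-1) b"
        unfolding Dside_def z2_def using r0 nu bb by (simp add: inner_diff_left nn dist_norm)
      have D1: "Dside x0 r0 \<nu> 1 b \<subseteq> ball x0 r0 - Ec"
        using Ecb unfolding Dside_def by force
      have D2: "Dside x0 r0 \<nu> (-1) b \<subseteq> ball x0 r0 - Ec"
        using Ecb unfolding Dside_def by force
      show "Dside x0 r0 \<nu> 1 (beta Ec x0 r0 * r0) \<subseteq> connected_component_set (ball x0 r0 - Ec) z1"
        using connected_component_maximal[OF z1D Dside_connected D1] unfolding b_def .
      show "Dside x0 r0 \<nu> (-1) (beta Ec x0 r0 * r0) \<subseteq> connected_component_set (ball x0 r0 - Ec) z2"
        using connected_component_maximal[OF z2D Dside_connected' D2] unfolding b_def .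
      show "connected_component_set (ball x0 r0 - Ec) z1 \<noteq> connected_component_set (ball x0 r0 - Ec) z2"
      proof
        assume eq: "connected_component_set (ball x0 r0 - Ec) z1 = connected_component_set (ball x0 r0 - Ec) z2"
        define T where "T = connected_component_set (ball x0 r0 - Ec) z1"
        have z1T: "z1 \<in> T" unfolding T_def using z1D D1 by auto
        have z2T: "z2 \<in> T" unfolding T_def eq using z2D D2 by auto
        have "inner \<nu> z2 \<le> inner \<nu> x0" unfolding z2_def using r0 by (simp add: inner_diff_right nn)
        moreover have "inner \<nu> x0 \<le> inner \<nu> z1" unfolding z1_def using r0 by (simp add: inner_add_right nn)
        ultimately obtain p where p: "p \<in> T" "inner \<nu> p = inner \<nu> x0"
          using connected_ivt_hyperplane[of T z2 z1 \<nu> "inner \<nu> x0"] z1T z2T unfolding T_def by auto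
        have "p \<in> ball x0 r0 - Ec" using p(1) connected_component_subset unfolding T_def by blast
        moreover have "p \<in> L" unfolding L_def line_normal_def using p(2) by (simp add: inner_diff_left inner_diff_right inner_commute[of _ \<nu>])
        ultimately show False unfolding Ec_def by auto
      qed
    qed
  qed
  have "H1 (E - K) \<le> H1 (Ec - K)" using minE sepc by blast
  also have "\<dots> \<le> H1 (L \<inter> ball x0 r0)" unfolding Ec_def by (intro H1_mono) auto
  also have "\<dots> \<le> ennreal (2 * r0)" unfolding L_def using nu(1) r0 by (rule line_H1_upper)
  also have "\<dots> < \<infinity>" by simp
  finally show ?thesis .
qed

lemma dist_lip: "\<bar>dist y p - dist y q\<bar> \<le> dist p q"
  by (metis abs_dist_diff_le dist_commute)

lemma no_island:
  assumes r0: "r0 > 0" and x0K: "x0 \<in> K"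
    and sepE: "sep_extension K x0 r0 E"
    and minE: "\<forall>E'. sep_extension K x0 r0 E' \<longrightarrow> H1 (E - K) \<le> H1 (E' - K)"
    and fin: "H1 (E - K) < \<infinity>"
    and yE: "y \<in> E" and rho: "\<rho> > 0" "\<rho> \<le> r0 / 10" and bsub: "ball y \<rho> \<subseteq> ball x0 r0"
    and Kfree: "K \<inter> ball y \<rho> = {}"
  shows "ennreal \<rho> \<le> H1 (E \<inter> ball y \<rho>)"
proof (rule ccontr)
  assume "\<not> ennreal \<rho> \<le> H1 (E \<inter> ball y \<rho>)"
  then have small: "H1 (E \<inter> ball y \<rho>) < ennreal \<rho>" by simp
  from sepE have Esub: "E \<subseteq> ball x0 r0" and Ec: "closedin (top_of_set (ball x0 r0)) E"
    and cE: "coral E" and KE: "K \<inter> ball x0 r0 \<subseteq> E"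
    and bEK: "beta E x0 r0 = beta K x0 r0" and sepa: "separates E x0 r0"
    unfolding sep_extension_def by auto
  from Ec obtain TE where TE: "closed TE" "E = ball x0 r0 \<inter> TE" by (auto simp: closedin_closed)
  obtain r where r: "0 < r" "r < \<rho>" "\<And>p. p \<in> E \<Longrightarrow> dist y p \<noteq> r"
  proof -
    have "\<not> {0<..<\<rho>} \<subseteq> dist y ` (E \<inter> ball y \<rho>)"
    proof
      assume "{0<..<\<rho>} \<subseteq> dist y ` (E \<inter> ball y \<rho>)"
      then have "ennreal (\<rho> - 0) \<le> H1 (E \<inter> ball y \<rho>)"
        using rho by (intro H1_lower_lip[of "dist y"] dist_lip) auto
      then show False using small by simp
    qed
    then obtain r where "r \<in> {0<..<\<rho>}" "r \<notin> dist y ` (E \<inter> ball y \<rho>)" by blast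
    then show ?thesis using that[of r] by force
  qed
  define rm where "rm = (r + \<rho>) / 2"
  have rm: "r < rm" "rm < \<rho>" using r unfolding rm_def by auto
  obtain \<rho>1 \<rho>2 where ann: "0 < \<rho>1" "\<rho>1 < r" "r < \<rho>2" "\<rho>2 < \<rho>"
    "\<And>p. p \<in> E \<Longrightarrow> \<not> (\<rho>1 \<le> dist y p \<and> dist y p \<le> \<rho>2)"
  proof -
    have cb: "cball y rm \<subseteq> ball y \<rho>" using rm by auto
    then have Ecb: "E \<inter> cball y rm = TE \<inter> cball y rm" using TE bsub by auto
    have "compact (E \<inter> cball y rm)" unfolding Ecb using TE(1) compact_cball by (rule closed_Int_compact)
    then have "compact (dist y ` (E \<inter> cball y rm))"
      by (intro compact_continuous_image continuous_intros)
    then have cl: "closed (dist y ` (E \<inter> cball y rm))" by (rule compact_imp_closed)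
    have "r \<notin> dist y ` (E \<inter> cball y rm)" using r(3) by auto
    then obtain e where e: "e > 0" "ball r e \<inter> dist y ` (E \<inter> cball y rm) = {}"
      using cl unfolding closed_def open_contains_ball by (metis ComplI disjoint_eq_subset_Compl)
    define e' where "e' = min (e/2) (min (r/2) ((rm - r)/2))"
    have e'1: "e' \<le> e/2" "e' \<le> r/2" "e' \<le> (rm - r)/2" unfolding e'_def by (auto simp: min_def)
    have e'2: "e' > 0" unfolding e'_def using e r rm by auto
    have e': "e' > 0" "e' < e" "e' \<le> r/2" "e' \<le> (rm - r)/2" using e'1 e'2 e by auto
    show ?thesis
    proof (rule that[of "r - e'" "r + e'"])
      show "0 < r - e'" "r - e' < r" "r < r + e'" "r + e' < \<rho>" using e' r rm by auto
      fix p assume pE: "p \<in> E"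
      show "\<not> (r - e' \<le> dist y p \<and> dist y p \<le> r + e')"
      proof
        assume a: "r - e' \<le> dist y p \<and> dist y p \<le> r + e'"
        then have "p \<in> cball y rm" using e' by simp
        then have "dist y p \<in> dist y ` (E \<inter> cball y rm)" using pE by auto
        moreover have "dist y p \<in> ball r e" using a e' unfolding mem_ball dist_real_def abs_less_iff by linarith
        ultimately show False using e by blast
      qed
    qed
  qed
  define E' where "E' = E - ball y r"
  have brsub: "ball y r \<subseteq> ball y \<rho>" using r by (simp add: subset_ball)
  have far: "dist y p > \<rho>2" if "p \<in> E'" for p
    using that ann(5)[of p] ann r unfolding E'_def by force
  have near: "dist y p < \<rho>1" if "p \<in> E \<inter> ball y r" for p
    using that ann(5)[of p] ann r by force
  have x0b: "x0 \<in> K \<inter> ball x0 r0" using x0K r0 by simp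
  have KE': "K \<inter> ball x0 r0 \<subseteq> E'" unfolding E'_def using KE Kfree brsub by blast
  have E'E: "E' \<subseteq> E" unfolding E'_def by auto
  have x0E': "E' \<inter> ball x0 r0 \<noteq> {}" using x0b KE' by blast
  have bE': "beta E' x0 r0 = beta K x0 r0"
  proof (rule antisym)
    show "beta E' x0 r0 \<le> beta K x0 r0" unfolding bEK[symmetric]
      using x0E' E'E r0 by (intro beta_mono) auto
    show "beta K x0 r0 \<le> beta E' x0 r0" using x0b KE' r0 by (intro beta_mono) auto
  qed
  from sepa obtain \<nu> z1 z2 where nu: "norm \<nu> = 1" "flat_dev E x0 r0 \<nu> = beta E x0 r0 * r0"
    and bhalf: "beta E x0 r0 \<le> 1/2"
    and D1: "Dside x0 r0 \<nu> 1 (beta E x0 r0 * r0) \<subseteq> connected_component_set (ball x0 r0 - E) z1"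
    and D2: "Dside x0 r0 \<nu> (-1) (beta E x0 r0 * r0) \<subseteq> connected_component_set (ball x0 r0 - E) z2"
    and Dne: "connected_component_set (ball x0 r0 - E) z1 \<noteq> connected_component_set (ball x0 r0 - E) z2"
    unfolding separates_def by blast
  have sep': "sep_extension K x0 r0 E'"
    unfolding sep_extension_def
  proof (intro conjI)
    show "E' \<subseteq> ball x0 r0" using Esub E'E by auto
    show "closedin (top_of_set (ball x0 r0)) E'"
    proof -
      have "E' = ball x0 r0 \<inter> (TE - ball y r)" unfolding E'_def TE(2) by auto
      moreover have "closed (TE - ball y r)" using TE(1) by (simp add: closed_Diff)
      ultimately show ?thesis by (simp add: closedin_closed_Int)
    qed
    show "K \<inter> ball x0 r0 \<subseteq> E'" by (rule KE')
    show "beta E' x0 r0 = beta K x0 r0" by (rule bE')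
    show "coral E'"
      unfolding coral_def
    proof (intro ballI allI impI)
      fix z and r' :: real assume z: "z \<in> E'" and r': "r' > 0"
      define s where "s = min r' (dist y z - \<rho>2)"
      have sp: "s > 0" unfolding s_def using r' far[OF z] by simp
      have "E \<inter> ball z s \<subseteq> E' \<inter> ball z r'"
      proof
        fix p assume p: "p \<in> E \<inter> ball z s"
        have "dist y z \<le> dist y p + dist p z" by (rule dist_triangle)
        then have "dist y p > \<rho>2" using p unfolding s_def by (auto simp: dist_commute)
        then show "p \<in> E' \<inter> ball z r'" using p ann unfolding E'_def s_def by auto
      qed
      moreover have "0 < H1 (E \<inter> ball z s)" using cE z sp E'E unfolding coral_def by blast
      ultimately show "H1 (E' \<inter> ball z r') > 0" using H1_mono by (metis order_less_le_trans)
    qed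
    show "separates E' x0 r0"
    proof -
      have bEE': "beta E' x0 r0 = beta E x0 r0" using bE' bEK by simp
      have s1: "beta E' x0 r0 \<le> 1/2" using bhalf bEE' by simp
      have s2: "flat_dev E' x0 r0 \<nu> = beta E' x0 r0 * r0"
      proof (rule antisym)
        have "flat_dev E' x0 r0 \<nu> \<le> flat_dev E x0 r0 \<nu>" using x0E' E'E by (intro fd_mono) auto
        then show "flat_dev E' x0 r0 \<nu> \<le> beta E' x0 r0 * r0" using nu bEE' by simp
        have "beta E' x0 r0 \<le> flat_dev E' x0 r0 \<nu> / r0" using x0E' r0 nu by (intro beta_le) auto
        then show "beta E' x0 r0 * r0 \<le> flat_dev E' x0 r0 \<nu>" using r0 by (simp add: field_simps)
      qed
      define b where "b = beta E x0 r0 * r0"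
      have bb: "b \<le> r0/2" using bhalf r0 unfolding b_def by (simp add: mult_right_mono[of _ "1/2" r0, simplified])
      have nn: "\<nu> \<bullet> \<nu> = 1" using nu by (simp add: dot_square_norm)
      have r10: "r < r0/10" using r rho by simp
      obtain w1 where w1: "w1 \<in> Dside x0 r0 \<nu> 1 b" "w1 \<notin> cball y r"
      proof -
        define a1 where "a1 = x0 + (6/10 * r0) *\<^sub>R \<nu>"
        define a2 where "a2 = x0 + (9/10 * r0) *\<^sub>R \<nu>"
        have "a1 \<in> Dside x0 r0 \<nu> 1 b" unfolding Dside_def a1_def using r0 nu bb by (simp add: inner_add_left nn dist_norm)
        moreover have "a2 \<in> Dside x0 r0 \<nu> 1 b" unfolding Dside_def a2_def using r0 nu bb by (simp add: inner_add_left nn dist_norm)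
        moreover have "dist a1 a2 = 3/10 * r0" unfolding a1_def a2_def dist_norm using nu r0
          by (simp add: algebra_simps scaleR_diff_left[symmetric])
        then have "\<not> (a1 \<in> cball y r \<and> a2 \<in> cball y r)" using r10 r(1) dist_triangle[of a1 a2 y]
          by (auto simp: dist_commute)
        ultimately show ?thesis using that by blast
      qed
      obtain w2 where w2: "w2 \<in> Dside x0 r0 \<nu> (-1) b" "w2 \<notin> cball y r"
      proof -
        define a1 where "a1 = x0 - (6/10 * r0) *\<^sub>R \<nu>"
        define a2 where "a2 = x0 - (9/10 * r0) *\<^sub>R \<nu>"
        have "a1 \<in> Dside x0 r0 \<nu> (-1) b" unfolding Dside_def a1_def using r0 nu bb by (simp add: inner_diff_left nn dist_norm)
        moreover have "a2 \<in> Dside x0 r0 \<nu> (-1) b" unfolding Dside_def a2_def using r0 nu bb by (simp add: inner_diff_left nn dist_norm)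
        moreover have "dist a1 a2 = 3/10 * r0" unfolding a1_def a2_def dist_norm using nu r0
          by (simp add: algebra_simps scaleR_diff_left[symmetric])
        then have "\<not> (a1 \<in> cball y r \<and> a2 \<in> cball y r)" using r10 r(1) dist_triangle[of a1 a2 y]
          by (auto simp: dist_commute)
        ultimately show ?thesis using that by blast
      qed
      define W where "W = ball x0 r0 - E"
      define U where "U = ball x0 r0 - E'"
      have WU: "W \<subseteq> U" unfolding W_def U_def using E'E by auto
      have w1W: "w1 \<in> connected_component_set W z1" using w1 D1 unfolding W_def b_def by auto
      have w2W: "w2 \<in> connected_component_set W z2" using w2 D2 unfolding W_def b_def by auto
      have C1: "connected_component_set W w1 = connected_component_set W z1" using w1W by (rule connected_component_eq)
      have C2: "connected_component_set W w2 = connected_component_set W z2" using w2W by (rule connected_component_eq)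
      have s3: "Dside x0 r0 \<nu> 1 (beta E' x0 r0 * r0) \<subseteq> connected_component_set (ball x0 r0 - E') w1"
        using D1 C1 connected_component_mono[OF WU, of w1] bEE' unfolding W_def U_def by auto
      have s4: "Dside x0 r0 \<nu> (-1) (beta E' x0 r0 * r0) \<subseteq> connected_component_set (ball x0 r0 - E') w2"
        using D2 C2 connected_component_mono[OF WU, of w2] bEE' unfolding W_def U_def by auto
      have "cball y r \<subseteq> ball y \<rho>" using r by auto
      then have cyr: "cball y r \<subseteq> ball x0 r0" using bsub by (rule order_trans)
      have s5: "connected_component_set (ball x0 r0 - E') w1 \<noteq> connected_component_set (ball x0 r0 - E') w2"
        unfolding U_def[symmetric]
      proof (rule island_components[of W U y r w1 w2])
        have "W = ball x0 r0 - TE" unfolding W_def TE(2) by auto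
        then show "open W" using TE(1) by (simp add: open_Diff)
        show "W \<subseteq> U" by (rule WU)
        show "U - W \<subseteq> ball y r" unfolding U_def W_def E'_def by auto
        show "ball y r \<subseteq> U" unfolding U_def E'_def using cyr by auto
        show "sphere y r \<subseteq> W" unfolding W_def using cyr r(3) by auto
        show "0 < r" by (rule r)
        show "w1 \<in> W" "w2 \<in> W" using w1W w2W connected_component_subset by blast+
        show "w1 \<notin> cball y r" "w2 \<notin> cball y r" by (rule w1(2), rule w2(2))
        show "connected_component_set W w1 \<noteq> connected_component_set W w2"
          using C1 C2 Dne unfolding W_def by simp
      qed
      show ?thesis unfolding separates_def using s1 s2 s3 s4 s5 nu(1) by blast
    qed
  qed
  have le1: "H1 (E - K) \<le> H1 (E' - K)" using minE sep' by blast
  have split: "E - K = (E' - K) \<union> (E \<inter> ball y r)" unfolding E'_def using Kfree brsub by auto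
  have "H1 (E' - K) + H1 (E \<inter> ball y r) \<le> H1 (E - K)"
    unfolding split
  proof (rule H1_add_sep[of "\<rho>2 - \<rho>1"])
    show "0 < \<rho>2 - \<rho>1" using ann by simp
    fix p q assume p: "p \<in> E' - K" and q: "q \<in> E \<inter> ball y r"
    have "dist y p \<le> dist y q + dist q p" by (rule dist_triangle)
    then show "\<rho>2 - \<rho>1 \<le> dist p q" using far[of p] near[OF q] p by (simp add: dist_commute)
  qed
  then have "H1 (E' - K) + H1 (E \<inter> ball y r) \<le> H1 (E' - K)" using le1 by (rule order_trans)
  then have "H1 (E' - K) + H1 (E \<inter> ball y r) \<le> H1 (E' - K) + 0" by simp
  moreover have pos: "0 < H1 (E \<inter> ball y r)" using cE yE r unfolding coral_def by blast
  moreover have "H1 (E' - K) \<le> H1 (E - K)" using E'E by (intro H1_mono) auto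
  then have fin': "H1 (E' - K) \<noteq> \<infinity>" using fin by auto
  ultimately show False unfolding ennreal_add_left_cancel_le by simp
qed

theorem lemma4p25:
  fixes C :: "mat2 \<Rightarrow> mat2" and c0 :: real and \<Omega> :: "pt set" and h :: "real \<Rightarrow> ennreal"
    and u :: "pt \<Rightarrow> pt" and K E :: "pt set" and x0 :: pt and r0 :: real
  assumes "open \<Omega>"
    and "elasticity_tensor C c0"
    and "gauge h"
    and "griffith_almost_min C \<Omega> h u K"
    and "x0 \<in> K" and "r0 > 0" and "ball x0 r0 \<subseteq> \<Omega>"
    and "beta K x0 r0 \<le> tau / 10"
    and "min_sep_extension K x0 r0 E"
  shows "\<forall>x \<in> K \<inter> ball x0 (9*r0/10). \<forall>t. sigma K E x0 r0 x < t \<and> t \<le> r0/10 \<longrightarrow>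
           beta K x t \<le> tau \<and> beta E x t \<le> 4 * tau"
proof (intro ballI allI impI)
  note x0K = \<open>x0 \<in> K\<close> and r0 = \<open>r0 > 0\<close> and bO = \<open>ball x0 r0 \<subseteq> \<Omega>\<close> and bK = \<open>beta K x0 r0 \<le> tau / 10\<close>
  fix x t assume x: "x \<in> K \<inter> ball x0 (9*r0/10)" and t: "sigma K E x0 r0 x < t \<and> t \<le> r0/10"
  from assms(4) have adm: "admissible \<Omega> u K" and cK: "coral K"
    unfolding griffith_almost_min_def by auto
  from adm have KcO: "closedin (top_of_set \<Omega>) K" unfolding admissible_def by auto
  have Kc: "closedin (top_of_set (ball x0 r0)) (K \<inter> ball x0 r0)"
  proof -
    obtain T where "closed T" "K = \<Omega> \<inter> T" using KcO by (auto simp: closedin_closed)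
    then have "K \<inter> ball x0 r0 = ball x0 r0 \<inter> T" using bO by auto
    then show ?thesis using \<open>closed T\<close> by (simp add: closedin_closed_Int)
  qed
  from assms(9) have sepE: "sep_extension K x0 r0 E"
    and minE: "\<forall>E'. sep_extension K x0 r0 E' \<longrightarrow> H1 (E - K) \<le> H1 (E' - K)"
    unfolding min_sep_extension_def by auto
  have fin: "H1 (E - K) < \<infinity>" by (rule ext_finite[OF r0 x0K Kc cK sepE minE])
  from sepE have Esub: "E \<subseteq> ball x0 r0" and KE: "K \<inter> ball x0 r0 \<subseteq> E"
    and bEK: "beta E x0 r0 = beta K x0 r0" and sepa: "separates E x0 r0"
    unfolding sep_extension_def by auto
  define S where "S = {r. 0 < r \<and> (\<forall>t. r \<le> t \<and> t \<le> r0/10 \<longrightarrow> good_ball K E x0 r0 x t)}"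
  have "r0 \<in> S" unfolding S_def using r0 by auto
  moreover have "bdd_below S" unfolding S_def by (rule bdd_belowI[of _ 0]) auto
  moreover have "Inf S < t" using t unfolding sigma_def S_def by simp
  ultimately obtain r where rS: "r \<in> S" "r < t" using cInf_less_iff by blast
  have good: "good_ball K E x0 r0 x s" if "t \<le> s" "s \<le> r0/10" for s
    using rS that unfolding S_def by auto
  have gt: "good_ball K E x0 r0 x t" using good t by simp
  then have tp: "t > 0" and bKt: "beta K x t \<le> tau" unfolding good_ball_def by auto
  have xK: "x \<in> K" and xb: "dist x0 x < 9*r0/10" using x by auto
  have xE: "x \<in> E" using KE xK xb r0 by auto
  have taup: "tau > 0" unfolding tau_def by simp
  have bEt: "beta E x t \<le> 4 * tau"
  proof (cases "2 * t \<le> r0/10")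
    case False
    from sepa obtain \<nu> where nu: "norm \<nu> = 1" "flat_dev E x0 r0 \<nu> = beta E x0 r0 * r0"
      unfolding separates_def by auto
    have fl: "\<bar>(p - x0) \<bullet> \<nu>\<bar> \<le> tau / 10 * r0" if "p \<in> E" for p
      using sep_flat[OF sepE that x0K r0 nu] bEK bK r0 by (metis mult_right_mono order_trans less_imp_le)
    have "flat_dev E x t \<nu> \<le> 4 * tau * t"
    proof (rule fd_least)
      show "E \<inter> ball x t \<noteq> {}" using xE tp by auto
      fix p assume p: "p \<in> E \<inter> ball x t"
      have "infdist p (line_normal x \<nu>) = \<bar>(p - x) \<bullet> \<nu>\<bar>" by (rule infdist_line[OF nu(1)])
      also have "\<dots> = \<bar>(p - x0) \<bullet> \<nu> - (x - x0) \<bullet> \<nu>\<bar>" by (simp add: inner_diff_left)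
      also have "\<dots> \<le> tau / 10 * r0 + tau / 10 * r0"
      proof -
        have pE: "p \<in> E" using p by simp
        show ?thesis using abs_triangle_ineq4[of "(p - x0) \<bullet> \<nu>" "(x - x0) \<bullet> \<nu>"] fl[OF pE] fl[OF xE] by linarith
      qed
      also have "\<dots> \<le> 4 * tau * t" using False taup by (simp add: field_simps)
      finally show "infdist p (line_normal x \<nu>) \<le> 4 * tau * t" .
    qed
    moreover have "beta E x t \<le> flat_dev E x t \<nu> / t" using xE tp nu by (intro beta_le) auto
    moreover have "flat_dev E x t \<nu> / t \<le> 4 * tau * t / t" using tp calculation(1) by (intro divide_right_mono) auto
    ultimately have "beta E x t \<le> 4 * tau * t / t" by linarith
    then show ?thesis using tp by simp
  next
    case True
    have g2: "good_ball K E x0 r0 x (2*t)" using good True tp by simp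
    then have bK2: "beta K x (2*t) \<le> tau" and HE2: "H1 ((E \<inter> ball x (2*t)) - K) \<le> ennreal (tau * (2*t))"
      unfolding good_ball_def by auto
    have b2sub: "ball x (2*t) \<subseteq> ball x0 r0"
    proof
      fix z assume "z \<in> ball x (2*t)"
      then have "dist x0 z < 9*r0/10 + 2*t" using xb dist_triangle[of x0 z x] by (simp add: dist_commute)
      then show "z \<in> ball x0 r0" using True by simp
    qed
    show ?thesis
    proof (rule field_le_epsilon)
      fix \<epsilon> :: real assume ep: "\<epsilon> > 0"
      define e where "e = \<epsilon> * t / 2"
      have e: "e > 0" unfolding e_def using ep tp by simp
      have "beta K x (2*t) * (2*t) \<le> tau * (2*t)" using bK2 tp by (intro mult_right_mono) auto
      then have "beta K x (2*t) * (2*t) < 2 * tau * t + e" using e by simp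
      moreover have "K \<inter> ball x (2*t) \<noteq> {}" using xK tp by auto
      ultimately have "\<exists>\<nu>. norm \<nu> = 1 \<and> flat_dev K x (2*t) \<nu> < 2 * tau * t + e"
        using beta_lt[of K x "2*t"] tp by simp
      then obtain \<nu> where nu: "norm \<nu> = 1" "flat_dev K x (2*t) \<nu> < 2 * tau * t + e" by blast
      have Kb: "\<bar>(k - x) \<bullet> \<nu>\<bar> < 2 * tau * t + e" if "k \<in> K \<inter> ball x (2*t)" for k
        using fd_upper[OF that, of \<nu>] infdist_line[OF nu(1)] nu(2) by simp
      have claim: "\<bar>(p - x) \<bullet> \<nu>\<bar> \<le> 4 * tau * t + 2 * e" if p: "p \<in> E \<inter> ball x t" for p
      proof (rule ccontr)
        assume "\<not> ?thesis"
        then have d: "\<bar>(p - x) \<bullet> \<nu>\<bar> > 4 * tau * t + 2 * e" by simp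
        define \<rho> where "\<rho> = \<bar>(p - x) \<bullet> \<nu>\<bar> - 2 * tau * t - e"
        have rp: "\<rho> > 2 * tau * t" unfolding \<rho>_def using d e by simp
        have "\<bar>(p - x) \<bullet> \<nu>\<bar> \<le> norm (p - x) * norm \<nu>" by (rule Cauchy_Schwarz_ineq2)
        then have "\<bar>(p - x) \<bullet> \<nu>\<bar> < t" using p nu by (simp add: dist_norm norm_minus_commute)
        moreover have "0 \<le> tau * t" using taup tp by simp
        ultimately have rt: "\<rho> < t" unfolding \<rho>_def using e by linarith
        have bp: "ball p \<rho> \<subseteq> ball x (2*t)"
        proof
          fix z assume "z \<in> ball p \<rho>"
          then show "z \<in> ball x (2*t)" using p rt dist_triangle[of x z p] by (simp add: dist_commute)
        qed
        have Kfree: "K \<inter> ball p \<rho> = {}"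
        proof (rule ccontr)
          assume "K \<inter> ball p \<rho> \<noteq> {}"
          then obtain k where k: "k \<in> K" "dist p k < \<rho>" by auto
          have "\<bar>(k - x) \<bullet> \<nu>\<bar> < 2 * tau * t + e" using Kb k bp by auto
          moreover have "\<bar>(p - k) \<bullet> \<nu>\<bar> \<le> norm (p - k) * norm \<nu>" by (rule Cauchy_Schwarz_ineq2)
          moreover have "(p - x) \<bullet> \<nu> = (p - k) \<bullet> \<nu> + (k - x) \<bullet> \<nu>" by (simp add: inner_diff_left)
          ultimately have "\<bar>(p - x) \<bullet> \<nu>\<bar> < \<rho> + 2 * tau * t + e" using k nu by (simp add: dist_norm)
          then show False unfolding \<rho>_def by simp
        qed
        have "ennreal \<rho> \<le> H1 (E \<inter> ball p \<rho>)"
        proof (rule no_island[OF r0 x0K sepE minE fin])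
          show "p \<in> E" using p by simp
          show "0 < \<rho>" using rp \<open>0 \<le> tau * t\<close> by linarith
          show "\<rho> \<le> r0 / 10" using rt True tp by simp
          show "ball p \<rho> \<subseteq> ball x0 r0" using bp b2sub by simp
          show "K \<inter> ball p \<rho> = {}" by (rule Kfree)
        qed
        also have "\<dots> \<le> H1 ((E \<inter> ball x (2*t)) - K)" using bp Kfree by (intro H1_mono) auto
        also have "\<dots> \<le> ennreal (tau * (2*t))" by (rule HE2)
        finally have "\<rho> \<le> tau * (2*t)" using taup tp by (simp add: ennreal_le_iff)
        then show False using rp by simp
      qed
      have "flat_dev E x t \<nu> \<le> 4 * tau * t + 2 * e"
      proof (rule fd_least)
        show "E \<inter> ball x t \<noteq> {}" using xE tp by auto
        fix p assume "p \<in> E \<inter> ball x t"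
        then show "infdist p (line_normal x \<nu>) \<le> 4 * tau * t + 2 * e" using claim infdist_line[OF nu(1)] by simp
      qed
      moreover have "beta E x t \<le> flat_dev E x t \<nu> / t" using xE tp nu by (intro beta_le) auto
      moreover have "flat_dev E x t \<nu> / t \<le> (4 * tau * t + 2 * e) / t" using tp calculation(1) by (intro divide_right_mono) auto
      ultimately have "beta E x t \<le> (4 * tau * t + 2 * e) / t" by linarith
      also have "\<dots> = 4 * tau + \<epsilon>" unfolding e_def using tp by (simp add: field_simps)
      finally show "beta E x t \<le> 4 * tau + \<epsilon>" .
    qed
  qed
  show "beta K x t \<le> tau \<and> beta E x t \<le> 4 * tau" using bKt bEt by simp
qed

end
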